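(* Fix any total budget $\mathrm{TB}\in\mathbb N_0$ and game forms $G,H$. Suppose $G$ has an inverse $G'$, i.e. $G+G'=0$. Then $G+H=G$ implies $H=0$.
   Context: Game forms are defined recursively: $G=\{G^{\mathcal L}\mid G^{\mathcal R}\}$ with finite sets of Left and Right options, and finite birthday. $0=\{\varnothing\mid\varnothing\}$. The budget set for total budget $\mathrm{TB}$ is $\mathcal B=\{0,\dots,\mathrm{TB},\hat 0,\dots,\widehat{\mathrm{TB}}\}$: state $p$ (resp. $\hat p$) means Left holds $p$ dollars and Right holds $\mathrm{TB}-p$, and Right (resp. Left) holds the tie-breaking marker. Play of $(G,\tilde p)$: at every position (terminal ones included) both players bid simultaneously, Left $\ell\in\{0,\dots,p\}$, Right $r\in\{0,\dots,\mathrm{TB}-p\}$. If Left holds the marker (state $\hat p$): if $\ell>r$ Left moves to $(G^L,\widehat{p-\ell})$, or, including the marker (allowed when $\ell\ge r$), to $(G^L,p-\ell)$; if $\ell=r$ Left wins, the marker passes to Right, play continues at $(G^L,p-\ell)$; if $\ell<r$ Right moves to $(G^R,\widehat{p+r})$. Symmetrically when Right holds the marker (state $p$): if $r>\ell$ Right moves to $(G^R,p+r)$ or, including the marker, to $(G^R,\widehat{p+r})$; if $r=\ell$ Right wins, the marker passes to Left, play continues at $(G^R,\widehat{p+r})$; if $r<\ell$ Left moves to $(G^L,p-\ell)$. A player who wins a bid but has no option loses. $o(G,\tilde p)\in\{\mathrm L,\mathrm R\}$ is the winner under optimal play; $\mathrm L>\mathrm R$. Disjunctive sum $G+H=\{G^{\mathcal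 L}+H,G+H^{\mathcal L}\mid G^{\mathcal R}+H,G+H^{\mathcal R}\}$. $G\ge H$ means $o(G+X,\tilde p)\ge o(H+X,\tilde p)$ for all game forms $X$ and all $\tilde p\in\mathcal B$; $G=H$ means $G\ge H$ and $H\ge G$. *)

theory Defs
  imports Main "HOL-Library.FSet"
begin

text \<open>Game forms: finite sets of Left and Right options (finite birthday by well-foundedness).\<close>
datatype game = Game (lopts: "game fset") (ropts: "game fset")

definition zero_game :: game where
  "zero_game = Game {||} {||}"

lemma size_lopt: "x |\<in>| L \<Longrightarrow> size x < size (Game L R)"
proof -
  assume "x |\<in>| L"
  hence "Suc (size x) \<le> (\<Sum>y\<in>fset L. Suc (size y))"
    by (intro member_le_sum[where f = "\<lambda>y. Suc (size y)", simplified]) auto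
  thus ?thesis by simp
qed

lemma size_ropt: "x |\<in>| R \<Longrightarrow> size x < size (Game L R)"
proof -
  assume "x |\<in>| R"
  hence "Suc (size x) \<le> (\<Sum>y\<in>fset R. Suc (size y))"
    by (intro member_le_sum[where f = "\<lambda>y. Suc (size y)", simplified]) auto
  thus ?thesis by simp
qed

function gplus :: "game \<Rightarrow> game \<Rightarrow> game" where
  "gplus (Game GL GR) (Game HL HR) =
     Game ((\<lambda>X. gplus X (Game HL HR)) |`| GL |\<union>| (\<lambda>Y. gplus (Game GL GR) Y) |`| HL)
          ((\<lambda>X. gplus X (Game HL HR)) |`| GR |\<union>| (\<lambda>Y. gplus (Game GL GR) Y) |`| HR)"
  by pat_completeness auto
termination
  by (relation "measure (\<lambda>(G, H). size G + size H)")
     (auto dest: size_lopt[of _ _ GR for GR] size_ropt[of _ _ GL for GL])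

text \<open>
  Left wins (under optimal play) the game G from budget state (p, m), where
  Left holds p dollars, Right holds TB - p, and m = True means Left holds the
  tie-breaking marker (state \<open>p\<close> with a hat), m = False means Right holds it.  A player who wins the bid but has
  no option loses.\<close>
primrec lwins :: "nat \<Rightarrow> game \<Rightarrow> nat \<Rightarrow> bool \<Rightarrow> bool" where
  "lwins TB (Game Ls Rs) = (\<lambda>p m.
     (let WL = lwins TB |`| Ls; WR = lwins TB |`| Rs in
      \<exists>l\<le>p. \<forall>r\<le>TB - p.
        (if m then
           (if r < l then (\<exists>w |\<in>| WL. w (p - l) True \<or> w (p - l) False)
            else if l = r then (\<exists>w |\<in>| WL. w (p - l) False)
            else (\<forall>w |\<in>| WR. w (p + r) True))
         else
           (if l < r then (\<forall>w |\<in>| WR. w (p + r) False \<and> w (p + r) True)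
            else if l = r then (\<forall>w |\<in>| WR. w (p + r) True)
            else (\<exists>w |\<in>| WL. w (p - l) False)))))"

text \<open>Outcome: True = L, False = R; with the order L > R this is the order on bool.\<close>
definition outcome :: "nat \<Rightarrow> game \<Rightarrow> nat \<Rightarrow> bool \<Rightarrow> bool" where
  "outcome TB G p m = lwins TB G p m"

definition game_ge :: "nat \<Rightarrow> game \<Rightarrow> game \<Rightarrow> bool" where
  "game_ge TB G H \<longleftrightarrow>
     (\<forall>X p m. p \<le> TB \<longrightarrow> (outcome TB (gplus H X) p m \<longrightarrow> outcome TB (gplus G X) p m))"

definition game_eq :: "nat \<Rightarrow> game \<Rightarrow> game \<Rightarrow> bool" where
  "game_eq TB G H \<longleftrightarrow> game_ge TB G H \<and> game_ge TB H G"

end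

theory Submission
  imports Defs
begin

lemma gplus_zero: "gplus zero_game H = H"
proof (induction H rule: measure_induct_rule[of size])
  case (less H)
  obtain HL HR where H: "H = Game HL HR" by (cases H)
  have "(\<lambda>Y. gplus zero_game Y) |`| HL = id |`| HL"
  proof (rule fset.map_cong[OF refl])
    fix z assume "z |\<in>| HL" then have "size z < size H" using H size_lopt by blast
    then show "gplus zero_game z = id z" using less by simp
  qed
  moreover have "(\<lambda>Y. gplus zero_game Y) |`| HR = id |`| HR"
  proof (rule fset.map_cong[OF refl])
    fix z assume "z |\<in>| HR" then have "size z < size H" using H size_ropt by blast
    then show "gplus zero_game z = id z" using less by simp
  qed
  ultimately show ?case using H by (simp add: zero_game_def)
qed

lemma gplus_comm: "gplus G H = gplus H G"
proof (induction G H rule: gplus.induct)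
  case (1 GL GR HL HR)
  have a: "(\<lambda>X. gplus X (Game HL HR)) |`| GL = (\<lambda>X. gplus (Game HL HR) X) |`| GL"
    by (rule fset.map_cong[OF refl]) (rule 1)
  have b: "(\<lambda>Y. gplus (Game GL GR) Y) |`| HL = (\<lambda>Y. gplus Y (Game GL GR)) |`| HL"
    by (rule fset.map_cong[OF refl]) (rule 1)
  have c: "(\<lambda>X. gplus X (Game HL HR)) |`| GR = (\<lambda>X. gplus (Game HL HR) X) |`| GR"
    by (rule fset.map_cong[OF refl]) (rule 1)
  have d: "(\<lambda>Y. gplus (Game GL GR) Y) |`| HR = (\<lambda>Y. gplus Y (Game GL GR)) |`| HR"
    by (rule fset.map_cong[OF refl]) (rule 1)
  show ?case by (simp only: gplus.simps a b c d funion_commute)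
qed

lemma gplus_assoc_aux: "size A + size B + size C = n \<Longrightarrow> gplus (gplus A B) C = gplus A (gplus B C)"
proof (induction n arbitrary: A B C rule: less_induct)
  case (less n)
  obtain AL AR where A: "A = Game AL AR" by (cases A)
  obtain BL BR where B: "B = Game BL BR" by (cases B)
  obtain CL CR where C: "C = Game CL CR" by (cases C)
  have IH: "\<And>A' B' C'. size A' + size B' + size C' < n \<Longrightarrow> gplus (gplus A' B') C' = gplus A' (gplus B' C')"
    using less by blast
  have sa: "\<And>x. x |\<in>| AL \<Longrightarrow> size x < size A" "\<And>x. x |\<in>| AR \<Longrightarrow> size x < size A"
    using A size_lopt size_ropt by auto
  have sb: "\<And>x. x |\<in>| BL \<Longrightarrow> size x < size B" "\<And>x. x |\<in>| BR \<Longrightarrow> size x < size B"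
    using B size_lopt size_ropt by auto
  have sc: "\<And>x. x |\<in>| CL \<Longrightarrow> size x < size C" "\<And>x. x |\<in>| CR \<Longrightarrow> size x < size C"
    using C size_lopt size_ropt by auto
  define BC where "BC = gplus B C"
  define AB where "AB = gplus A B"
  have BCe: "BC = Game ((\<lambda>X. gplus X C) |`| BL |\<union>| (\<lambda>Y. gplus B Y) |`| CL)
          ((\<lambda>X. gplus X C) |`| BR |\<union>| (\<lambda>Y. gplus B Y) |`| CR)"
    unfolding BC_def B C by simp
  have ABe: "AB = Game ((\<lambda>X. gplus X B) |`| AL |\<union>| (\<lambda>Y. gplus A Y) |`| BL)
          ((\<lambda>X. gplus X B) |`| AR |\<union>| (\<lambda>Y. gplus A Y) |`| BR)"
    unfolding AB_def A B by simp
  have L: "gplus AB C = Game ((\<lambda>X. gplus X C) |`| lopts AB |\<union>| (\<lambda>Y. gplus AB Y) |`| CL)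
          ((\<lambda>X. gplus X C) |`| ropts AB |\<union>| (\<lambda>Y. gplus AB Y) |`| CR)"
    by (simp only: ABe C gplus.simps game.sel)
  have R: "gplus A BC = Game ((\<lambda>X. gplus X BC) |`| AL |\<union>| (\<lambda>Y. gplus A Y) |`| lopts BC)
          ((\<lambda>X. gplus X BC) |`| AR |\<union>| (\<lambda>Y. gplus A Y) |`| ropts BC)"
    by (simp only: BCe A gplus.simps game.sel)
  have e1: "(\<lambda>X. gplus X C) |`| lopts AB = (\<lambda>X. gplus X BC) |`| AL |\<union>| (\<lambda>Y. gplus A Y) |`| ((\<lambda>X. gplus X C) |`| BL)"
  proof -
    have "(\<lambda>X. gplus X C) |`| ((\<lambda>X. gplus X B) |`| AL) = (\<lambda>X. gplus X BC) |`| AL"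
      unfolding fset.map_comp o_def BC_def
      by (rule fset.map_cong[OF refl]) (rule IH, (drule sa(1) | drule sa(2)), insert less.prems, linarith)
    moreover have "(\<lambda>X. gplus X C) |`| ((\<lambda>Y. gplus A Y) |`| BL) = (\<lambda>Y. gplus A Y) |`| ((\<lambda>X. gplus X C) |`| BL)"
      unfolding fset.map_comp o_def
      by (rule fset.map_cong[OF refl]) (rule IH, (drule sb(1) | drule sb(2)), insert less.prems, linarith)
    ultimately show ?thesis by (simp only: ABe game.sel fimage_funion)
  qed
  have e2: "(\<lambda>X. gplus X C) |`| ropts AB = (\<lambda>X. gplus X BC) |`| AR |\<union>| (\<lambda>Y. gplus A Y) |`| ((\<lambda>X. gplus X C) |`| BR)"
  proof -
    have "(\<lambda>X. gplus X C) |`| ((\<lambda>X. gplus X B) |`| AR) = (\<lambda>X. gplus X BC) |`| AR"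
      unfolding fset.map_comp o_def BC_def
      by (rule fset.map_cong[OF refl]) (rule IH, (drule sa(1) | drule sa(2)), insert less.prems, linarith)
    moreover have "(\<lambda>X. gplus X C) |`| ((\<lambda>Y. gplus A Y) |`| BR) = (\<lambda>Y. gplus A Y) |`| ((\<lambda>X. gplus X C) |`| BR)"
      unfolding fset.map_comp o_def
      by (rule fset.map_cong[OF refl]) (rule IH, (drule sb(1) | drule sb(2)), insert less.prems, linarith)
    ultimately show ?thesis by (simp only: ABe game.sel fimage_funion)
  qed
  have e3: "(\<lambda>Y. gplus AB Y) |`| CL = (\<lambda>Y. gplus A Y) |`| ((\<lambda>Y. gplus B Y) |`| CL)"
    unfolding fset.map_comp o_def AB_def
    by (rule fset.map_cong[OF refl]) (rule IH, (drule sc(1) | drule sc(2)), insert less.prems, linarith)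
  have e4: "(\<lambda>Y. gplus AB Y) |`| CR = (\<lambda>Y. gplus A Y) |`| ((\<lambda>Y. gplus B Y) |`| CR)"
    unfolding fset.map_comp o_def AB_def
    by (rule fset.map_cong[OF refl]) (rule IH, (drule sc(1) | drule sc(2)), insert less.prems, linarith)
  have "gplus AB C = gplus A BC"
  proof -
    have hl: "lopts BC = (\<lambda>X. gplus X C) |`| BL |\<union>| (\<lambda>Y. gplus B Y) |`| CL" by (simp only: BCe game.sel)
    have hr: "ropts BC = (\<lambda>X. gplus X C) |`| BR |\<union>| (\<lambda>Y. gplus B Y) |`| CR" by (simp only: BCe game.sel)
    show ?thesis unfolding L R e1 e2 e3 e4 hl hr by (simp only: fimage_funion funion_assoc)
  qed
  thus ?case unfolding AB_def BC_def .
qed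

lemma gplus_assoc: "gplus (gplus A B) C = gplus A (gplus B C)"
  using gplus_assoc_aux[OF refl] .

theorem mainTheorem10:
  fixes TB :: nat and G H G' :: game
  assumes "game_eq TB (gplus G G') zero_game"
    and "game_eq TB (gplus G H) G"
  shows "game_eq TB H zero_game"
proof -
  have k: "gplus (gplus G G') (gplus H X) = gplus (gplus G H) (gplus G' X)" for X
  proof -
    have "gplus (gplus G G') (gplus H X) = gplus G (gplus (gplus G' H) X)" by (simp only: gplus_assoc)
    also have "\<dots> = gplus G (gplus (gplus H G') X)" by (simp only: gplus_comm[of G' H])
    also have "\<dots> = gplus (gplus G H) (gplus G' X)" by (simp only: gplus_assoc)
    finally show ?thesis .
  qed
  have k2: "gplus (gplus G G') X = gplus G (gplus G' X)" for X
    by (simp add: gplus_assoc)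
  from assms have a1: "game_ge TB (gplus G G') zero_game" "game_ge TB zero_game (gplus G G')"
    and a2: "game_ge TB (gplus G H) G" "game_ge TB G (gplus G H)"
    unfolding game_eq_def by auto
  have "game_ge TB H zero_game"
    unfolding game_ge_def
  proof (intro allI impI)
    fix X p m assume p: "p \<le> TB" and o: "outcome TB (gplus zero_game X) p m"
    have "outcome TB (gplus (gplus G G') X) p m"
      using a1(1) p o unfolding game_ge_def by blast
    hence "outcome TB (gplus (gplus G H) (gplus G' X)) p m"
      using a2(1) p unfolding game_ge_def k2 by blast
    hence "outcome TB (gplus (gplus G G') (gplus H X)) p m" by (simp add: k)
    hence "outcome TB (gplus zero_game (gplus H X)) p m"
      using a1(2) p unfolding game_ge_def by blast
    thus "outcome TB (gplus H X) p m" by (simp add: gplus_zero)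
  qed
  moreover have "game_ge TB zero_game H"
    unfolding game_ge_def
  proof (intro allI impI)
    fix X p m assume p: "p \<le> TB" and o: "outcome TB (gplus H X) p m"
    have "outcome TB (gplus zero_game (gplus H X)) p m" using o by (simp add: gplus_zero)
    hence "outcome TB (gplus (gplus G G') (gplus H X)) p m"
      using a1(1) p unfolding game_ge_def by blast
    hence "outcome TB (gplus (gplus G H) (gplus G' X)) p m" by (simp add: k)
    hence "outcome TB (gplus G (gplus G' X)) p m"
      using a2(2) p unfolding game_ge_def by blast
    hence "outcome TB (gplus (gplus G G') X) p m" by (simp add: k2)
    thus "outcome TB (gplus zero_game X) p m"
      using a1(2) p unfolding game_ge_def by blast
  qed
  ultimately show ?thesis unfolding game_eq_def by blast
qed

end
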